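(* In the setting below: (1) there are no non-trivial holomorphic $1$-forms on $T_M$; (2) if $K$ denotes the canonical bundle of $T_M$, then for every integer $k>0$ the bundle $K^{\otimes k}$ has no non-trivial global holomorphic sections; consequently the Kodaira dimension of $T_M$ equals $-\infty$.
   Context: Let $n\ge 1$ and let $M=(m_{ij})\in SL(2n+1,\mathbb Z)$. Assume that $M$ has exactly one real eigenvalue $\alpha$, that $\alpha>0$, $\alpha\neq 1$, that $\alpha$ is a simple eigenvalue, and that the remaining eigenvalues are $\beta_1,\dots,\beta_k,\bar\beta_1,\dots,\bar\beta_k$ with $\mathrm{Im}\,\beta_j>0$. Let $W\subset\mathbb C^{2n+1}$ be the direct sum of the generalized eigenspaces of $M$ for $\beta_1,\dots,\beta_k$ (so $\dim_{\mathbb C}W=n$). Fix a real eigenvector $a=(a^{(1)},\dots,a^{(2n+1)})^\top\in\mathbb R^{2n+1}$ of $M$ for $\alpha$ and a basis $b_1,\dots,b_n$ of $W$, $b_j=(b_j^{(1)},\dots,b_j^{(2n+1)})^\top$, and let $R=(r_{\ell j})\in M_n(\mathbb C)$ be given by $Mb_j=\sum_{\ell=1}^n r_{\ell j}b_\ell$. For $i=1,\dots,2n+1$ put $u_i=(a^{(i)},b_1^{(i)},\dots,b_n^{(i)})^\top\in\mathbb R\times\mathbb C^n$. Let $\mathbb H=\{w\in\mathbb C:\mathrm{Im}\,w>0\}$, and define holomorphic automorphisms of $\mathbb H\times\mathbb C^n$ by $g_0(w,z)=(\alpha w,R^\top z)$ and $g_i(w,z)=(w,z)+u_i$ for $1\le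 i\le 2n+1$. Let $G_M$ be the group generated by $g_0,\dots,g_{2n+1}$. The action of $G_M$ is free and properly discontinuous, and $T_M:=(\mathbb H\times\mathbb C^n)/G_M$ is a compact complex manifold of complex dimension $n+1$. *)

theory Defs
  imports "HOL-Analysis.Analysis"
begin

definition ceigenvalue :: "complex^'m^'m \<Rightarrow> complex \<Rightarrow> bool" where
  "ceigenvalue A \<mu> \<longleftrightarrow> (\<exists>v. v \<noteq> 0 \<and> A *v v = \<mu> *s v)"

definition gen_eigenspace :: "complex^'m^'m \<Rightarrow> complex \<Rightarrow> (complex^'m) set" where
  "gen_eigenspace A \<mu> = {v. \<exists>k. ((\<lambda>x. A *v x - \<mu> *s x) ^^ k) v = 0}"

text \<open>Points of C^(n+1) = C x C^n: coordinate None is w, coordinate Some j is z_j.\<close>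
definition upper_domain :: "(complex^('n::finite option)) set" where
  "upper_domain = {p. Im (p $ None) > 0}"

definition holo :: "(complex^'k \<Rightarrow> complex) \<Rightarrow> (complex^'k) set \<Rightarrow> bool" where
  "holo f S \<longleftrightarrow> (\<forall>p\<in>S. \<exists>L. (f has_derivative L) (at p) \<and> (\<forall>c v. L (c *s v) = c * L v))"

definition g0 :: "real \<Rightarrow> complex^'n^'n \<Rightarrow> complex^('n::finite option) \<Rightarrow> complex^('n option)" where
  "g0 \<alpha> R p = (\<chi> i. case i of None \<Rightarrow> complex_of_real \<alpha> * p $ None
                            | Some l \<Rightarrow> (\<Sum>j\<in>UNIV. R $ j $ l * p $ Some j))"

definition uvec :: "real^'m \<Rightarrow> ('n \<Rightarrow> complex^'m) \<Rightarrow> 'm \<Rightarrow> complex^('n::finite option)" where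
  "uvec a b i = (\<chi> c. case c of None \<Rightarrow> complex_of_real (a $ i) | Some j \<Rightarrow> b j $ i)"

definition generators :: "real \<Rightarrow> complex^'n^'n \<Rightarrow> real^'m \<Rightarrow> ('n \<Rightarrow> complex^'m)
    \<Rightarrow> (complex^('n::finite option) \<Rightarrow> complex^('n option)) set" where
  "generators \<alpha> R a b = insert (g0 \<alpha> R) ((\<lambda>i p. p + uvec a b i) ` UNIV)"

inductive_set gen_group :: "('a \<Rightarrow> 'a) set \<Rightarrow> ('a \<Rightarrow> 'a) set" for S where
  gg_id: "id \<in> gen_group S"
| gg_gen: "g \<in> gen_group S \<Longrightarrow> s \<in> S \<Longrightarrow> s \<circ> g \<in> gen_group S"
| gg_inv: "g \<in> gen_group S \<Longrightarrow> s \<in> S \<Longrightarrow> inv s \<circ> g \<in> gen_group S"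

definition form_at :: "('k \<Rightarrow> complex^'k \<Rightarrow> complex) \<Rightarrow> complex^'k \<Rightarrow> complex^'k \<Rightarrow> complex" where
  "form_at c p v = (\<Sum>i\<in>UNIV. c i p * v $ i)"

definition cjac :: "(complex^'k \<Rightarrow> complex^'k) \<Rightarrow> complex" where
  "cjac L = det (\<chi> i j. L (axis j 1) $ i)"

text \<open>G-invariant holomorphic 1-form on D (= holomorphic 1-form on D/G).\<close>
definition invariant_holo_1form where
  "invariant_holo_1form G D c \<longleftrightarrow> (\<forall>i. holo (c i) D) \<and>
     (\<forall>g\<in>G. \<forall>p\<in>D. \<forall>g'. (g has_derivative g') (at p) \<longrightarrow>
        (\<forall>v. form_at c (g p) (g' v) = form_at c p v))"

text \<open>G-invariant holomorphic section h (dw \<and> dz_1 \<and> ... \<and> dz_n)^{\<otimes>k} of K^k on D.\<close>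
definition invariant_pluricanonical where
  "invariant_pluricanonical G D (k::nat) h \<longleftrightarrow> holo h D \<and>
     (\<forall>g\<in>G. \<forall>p\<in>D. \<forall>g'. (g has_derivative g') (at p) \<longrightarrow>
        h (g p) * (cjac g') ^ k = h p)"

end

theory Submission
  imports Defs "HOL-Complex_Analysis.Complex_Analysis"
begin

lemma swapidseq_transfer:
  fixes h :: "'a \<Rightarrow> 'b" and \<Psi> :: "('a\<Rightarrow>'a) \<Rightarrow> ('b\<Rightarrow>'b)"
  assumes "inj h" "\<Psi> id = id" "\<And>a b p. \<Psi> (Transposition.transpose a b \<circ> p) = Transposition.transpose (h a) (h b) \<circ> \<Psi> p"
  shows "swapidseq n p \<Longrightarrow> swapidseq n (\<Psi> p)"
proof (induction rule: swapidseq.induct)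
  case id
  have "\<Psi> (\<lambda>a. a) = (\<lambda>a. a)" using assms(2) unfolding id_def .
  then show ?case by (simp add: id_def)
next
  case (comp_Suc n p a b)
  have "h a \<noteq> h b" using comp_Suc.hyps(2) assms(1) by (meson injD)
  then show ?case using comp_Suc.IH assms(3) swapidseq.comp_Suc by metis
qed

lemma sign_transfer:
  fixes h :: "'a \<Rightarrow> 'b" and \<Psi> :: "('a\<Rightarrow>'a) \<Rightarrow> ('b\<Rightarrow>'b)"
  assumes "inj h" "\<Psi> id = id" "\<And>a b p. \<Psi> (Transposition.transpose a b \<circ> p) = Transposition.transpose (h a) (h b) \<circ> \<Psi> p"
    and "permutation p"
  shows "sign (\<Psi> p) = sign p"
proof -
  obtain n where n: "swapidseq n p" using assms(4) unfolding permutation_def by blast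
  have n2: "swapidseq n (\<Psi> p)" using swapidseq_transfer[OF assms(1-3) n] .
  have "evenperm p = even n" using evenperm_unique[OF n] by simp
  moreover have "evenperm (\<Psi> p) = even n" using evenperm_unique[OF n2] by simp
  ultimately show ?thesis unfolding sign_def by simp
qed

lemma det_reindex:
  fixes A :: "'r::comm_ring_1^'b^'b" and e :: "'a::finite \<Rightarrow> 'b::finite"
  assumes e: "bij e"
  shows "det (\<chi> i j. A $ e i $ e j) = det A"
proof -
  define \<Psi> where "\<Psi> = (\<lambda>q::'a\<Rightarrow>'a. e \<circ> q \<circ> inv e)"
  have ie: "bij (inv e)" using e by (simp add: bij_imp_bij_inv)
  have Psi_id: "\<Psi> id = id" unfolding \<Psi>_def using e by (auto simp: fun_eq_iff bij_is_surj surj_f_inv_f)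
  have Psi_tr: "\<Psi> (Transposition.transpose a b \<circ> p) = Transposition.transpose (e a) (e b) \<circ> \<Psi> p" for a b p
  proof -
    have "e \<circ> Transposition.transpose a b = Transposition.transpose (e a) (e b) \<circ> e"
      using e by (simp add: fun_eq_iff transpose_apply_commute bij_is_inj)
    then show ?thesis unfolding \<Psi>_def by (metis comp_assoc)
  qed
  have bijPsi: "bij_betw \<Psi> {p. p permutes (UNIV::'a set)} {p. p permutes (UNIV::'b set)}"
  proof (rule bij_betw_byWitness[where f' = "\<lambda>p. inv e \<circ> p \<circ> e"])
    show "\<forall>a\<in>{p. p permutes UNIV}. inv e \<circ> \<Psi> a \<circ> e = a"
      unfolding \<Psi>_def using e by (auto simp: fun_eq_iff bij_is_inj)
    show "\<forall>a'\<in>{p. p permutes UNIV}. \<Psi> (inv e \<circ> a' \<circ> e) = a'"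
      unfolding \<Psi>_def using e by (auto simp: fun_eq_iff bij_is_surj surj_f_inv_f)
    show "\<Psi> ` {p. p permutes UNIV} \<subseteq> {p. p permutes UNIV}"
      unfolding \<Psi>_def using e ie by (auto intro!: bij_imp_permutes bij_comp dest: permutes_bij)
    show "(\<lambda>p. inv e \<circ> p \<circ> e) ` {p. p permutes UNIV} \<subseteq> {p. p permutes UNIV}"
      using e ie by (auto intro!: bij_imp_permutes bij_comp dest: permutes_bij)
  qed
  have "det A = (\<Sum>p\<in>\<Psi> ` {p. p permutes (UNIV::'a set)}. of_int (sign p) * (\<Prod>i\<in>UNIV. A $ i $ p i))"
    unfolding det_def using bijPsi by (simp add: bij_betw_def)
  also have "\<dots> = (\<Sum>q\<in>{p. p permutes (UNIV::'a set)}. of_int (sign (\<Psi> q)) * (\<Prod>i\<in>UNIV. A $ i $ \<Psi> q i))"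
    by (rule sum.reindex[unfolded comp_def]) (use bijPsi in \<open>simp add: bij_betw_def\<close>)
  also have "\<dots> = (\<Sum>q\<in>{p. p permutes (UNIV::'a set)}. of_int (sign q) * (\<Prod>i\<in>UNIV. A $ e i $ e (q i)))"
  proof (rule sum.cong[OF refl])
    fix q assume q: "q \<in> {p. p permutes (UNIV::'a set)}"
    have "sign (\<Psi> q) = sign q"
      by (rule sign_transfer[OF bij_is_inj[OF e] Psi_id Psi_tr]) (use q in \<open>metis finite_class.finite_UNIV permutation_permutes mem_Collect_eq\<close>)
    moreover have "(\<Prod>i\<in>UNIV. A $ i $ \<Psi> q i) = (\<Prod>i\<in>UNIV. A $ e i $ e (q i))"
    proof -
      have "(\<Prod>i\<in>UNIV. A $ i $ \<Psi> q i) = (\<Prod>i\<in>e ` UNIV. A $ i $ \<Psi> q i)"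
        using e by (simp add: bij_is_surj)
      also have "\<dots> = (\<Prod>i\<in>UNIV. A $ e i $ \<Psi> q (e i))"
        using e by (simp add: prod.reindex bij_is_inj)
      also have "\<dots> = (\<Prod>i\<in>UNIV. A $ e i $ e (q i))"
        unfolding \<Psi>_def using e by (simp add: bij_is_inj)
      finally show ?thesis .
    qed
    ultimately show "of_int (sign (\<Psi> q)) * (\<Prod>i\<in>UNIV. A $ i $ \<Psi> q i) = of_int (sign q) * (\<Prod>i\<in>UNIV. A $ e i $ e (q i))"
      by simp
  qed
  also have "\<dots> = det (\<chi> i j. A $ e i $ e j)"
    unfolding det_def by simp
  finally show ?thesis by simp
qed

lemma map_sum_perm_sign_l:
  assumes "permutation (p::'a\<Rightarrow>'a)"
  shows "sign (map_sum p (id::'b\<Rightarrow>'b)) = sign p"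
proof (rule sign_transfer[where h=Inl and \<Psi>="\<lambda>p. map_sum p id", OF _ _ _ assms])
  show "inj Inl" by simp
  show "map_sum id id = (id :: 'a+'b \<Rightarrow> 'a+'b)" by (auto simp: fun_eq_iff map_sum_def split: sum.splits)
  show "map_sum (Transposition.transpose a b \<circ> q) (id::'b\<Rightarrow>'b) = Transposition.transpose (Inl a) (Inl b) \<circ> map_sum q id" for a b q
  proof
    fix x show "map_sum (Transposition.transpose a b \<circ> q) (id::'b\<Rightarrow>'b) x = (Transposition.transpose (Inl a) (Inl b) \<circ> map_sum q id) x"
      by (cases x) (auto simp: Transposition.transpose_def)
  qed
qed

lemma map_sum_perm_sign_r:
  assumes "permutation (p::'b\<Rightarrow>'b)"
  shows "sign (map_sum (id::'a\<Rightarrow>'a) p) = sign p"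
proof (rule sign_transfer[where h=Inr and \<Psi>="\<lambda>p. map_sum id p", OF _ _ _ assms])
  show "inj Inr" by simp
  show "map_sum id id = (id :: 'a+'b \<Rightarrow> 'a+'b)" by (auto simp: fun_eq_iff map_sum_def split: sum.splits)
  show "map_sum (id::'a\<Rightarrow>'a) (Transposition.transpose a b \<circ> q) = Transposition.transpose (Inr a) (Inr b) \<circ> map_sum id q" for a b q
  proof
    fix x show "map_sum (id::'a\<Rightarrow>'a) (Transposition.transpose a b \<circ> q) x = (Transposition.transpose (Inr a) (Inr b) \<circ> map_sum id q) x"
      by (cases x) (auto simp: Transposition.transpose_def)
  qed
qed

lemma permutes_UNIV_bij: "p permutes UNIV \<longleftrightarrow> bij p"
  by (simp add: permutes_altdef)

lemma bij_map_sum: "bij f \<Longrightarrow> bij g \<Longrightarrow> bij (map_sum f g)"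
  by (rule o_bij[where g="map_sum (inv f) (inv g)"])
     (auto simp: fun_eq_iff map_sum_def bij_is_inj bij_is_surj surj_f_inv_f split: sum.splits)

lemma perm_finite: "(p::'a::finite\<Rightarrow>'a) permutes UNIV \<Longrightarrow> permutation p"
  by (metis finite_class.finite_UNIV permutation_permutes)

definition blockdiag :: "'r::zero^'a^'a \<Rightarrow> 'r^'b^'b \<Rightarrow> 'r^('a+'b)^('a+'b)" where
  "blockdiag A C = (\<chi> i j. case i of Inl x \<Rightarrow> (case j of Inl y \<Rightarrow> A$x$y | Inr _ \<Rightarrow> 0)
                                    | Inr x \<Rightarrow> (case j of Inl _ \<Rightarrow> 0 | Inr y \<Rightarrow> C$x$y))"

lemma det_blockdiag:
  fixes A :: "'r::comm_ring_1^'a::finite^'a" and C :: "'r^'b::finite^'b"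
  shows "det (blockdiag A C) = det A * det C"
proof -
  let ?X = "blockdiag A C"
  let ?S = "{p. p permutes (UNIV::('a+'b) set)}"
  let ?Sa = "{p. p permutes (UNIV::'a set)}"
  let ?Sb = "{p. p permutes (UNIV::'b set)}"
  define \<Phi> where "\<Phi> = (\<lambda>(p1::'a\<Rightarrow>'a, p2::'b\<Rightarrow>'b). map_sum p1 p2)"
  let ?t = "\<lambda>p. of_int (sign p) * (\<Prod>i\<in>UNIV. ?X $ i $ p i)"
  have img: "\<Phi> ` (?Sa \<times> ?Sb) \<subseteq> ?S"
  proof
    fix p assume "p \<in> \<Phi> ` (?Sa \<times> ?Sb)"
    then obtain p1 p2 where p: "p = map_sum p1 p2" "p1 permutes UNIV" "p2 permutes UNIV"
      unfolding \<Phi>_def by auto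
    have "bij p1" "bij p2" using p by (auto dest: permutes_bij)
    then have "bij (map_sum p1 p2)" by (simp add: bij_map_sum)
    then show "p \<in> ?S" using p by (simp add: permutes_UNIV_bij)
  qed
  have injPhi: "inj_on \<Phi> (?Sa \<times> ?Sb)"
  proof (rule inj_onI)
    fix x y assume "x \<in> ?Sa \<times> ?Sb" "y \<in> ?Sa \<times> ?Sb" "\<Phi> x = \<Phi> y"
    then show "x = y" unfolding \<Phi>_def
      by (cases x; cases y) (auto simp: fun_eq_iff map_sum_def split: sum.splits dest: fun_cong)
  qed
  have zero: "?t p = 0" if "p \<in> ?S - \<Phi> ` (?Sa \<times> ?Sb)" for p
  proof (rule ccontr)
    assume nz: "?t p \<noteq> 0"
    then have nzi: "?X $ i $ p i \<noteq> 0" for i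
      by (metis (no_types, lifting) finite_class.finite_UNIV iso_tuple_UNIV_I mult_zero_right prod_zero)
    have l: "\<exists>y. p (Inl x) = Inl y" for x
      using nzi[of "Inl x"] by (cases "p (Inl x)") (auto simp: blockdiag_def)
    have r: "\<exists>y. p (Inr x) = Inr y" for x
      using nzi[of "Inr x"] by (cases "p (Inr x)") (auto simp: blockdiag_def)
    define p1 where "p1 = (\<lambda>x. projl (p (Inl x)))"
    define p2 where "p2 = (\<lambda>x. projr (p (Inr x)))"
    have pe: "p = map_sum p1 p2"
    proof
      fix z show "p z = map_sum p1 p2 z"
      proof (cases z)
        case (Inl x)
        then obtain y where "p (Inl x) = Inl y" using l by blast
        then show ?thesis using Inl by (simp add: p1_def)
      next
        case (Inr x)
        then obtain y where "p (Inr x) = Inr y" using r by blast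
        then show ?thesis using Inr by (simp add: p2_def)
      qed
    qed
    have bp: "bij p" using that by (auto dest: permutes_bij)
    have "inj p1"
    proof (rule injI)
      fix x y assume "p1 x = p1 y"
      then have "p (Inl x) = p (Inl y)" using l unfolding p1_def by (metis sum.sel(1))
      then show "x = y" using bp by (simp add: bij_is_inj inj_eq)
    qed
    moreover have "inj p2"
    proof (rule injI)
      fix x y assume "p2 x = p2 y"
      then have "p (Inr x) = p (Inr y)" using r unfolding p2_def by (metis sum.sel(2))
      then show "x = y" using bp by (simp add: bij_is_inj inj_eq)
    qed
    ultimately have "p1 permutes UNIV" "p2 permutes UNIV"
      by (auto intro!: bij_imp_permutes simp: bij_def finite_UNIV_inj_surj)
    then have "p \<in> \<Phi> ` (?Sa \<times> ?Sb)" unfolding \<Phi>_def pe by auto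
    then show False using that by simp
  qed
  have "det ?X = sum ?t ?S" unfolding det_def by simp
  also have "\<dots> = sum ?t (\<Phi> ` (?Sa \<times> ?Sb))"
    by (rule sum.mono_neutral_right) (use img zero in auto)
  also have "\<dots> = (\<Sum>(p1,p2)\<in>?Sa \<times> ?Sb. ?t (map_sum p1 p2))"
    by (subst sum.reindex[OF injPhi]) (simp add: \<Phi>_def comp_def case_prod_unfold)
  also have "\<dots> = (\<Sum>(p1,p2)\<in>?Sa \<times> ?Sb. (of_int (sign p1) * (\<Prod>i\<in>UNIV. A $ i $ p1 i)) * (of_int (sign p2) * (\<Prod>i\<in>UNIV. C $ i $ p2 i)))"
  proof (rule sum.cong[OF refl], clarify)
    fix p1 p2 assume p: "p1 permutes (UNIV::'a set)" "p2 permutes (UNIV::'b set)"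
    have "map_sum p1 p2 = map_sum p1 id \<circ> map_sum id p2"
      by (simp add: fun_eq_iff map_sum_def split: sum.splits)
    moreover have "permutation (map_sum p1 (id::'b\<Rightarrow>'b))" "permutation (map_sum (id::'a\<Rightarrow>'a) p2)"
      using p by (auto intro!: perm_finite bij_imp_permutes simp: bij_map_sum dest: permutes_bij)
    ultimately have s: "sign (map_sum p1 p2) = sign p1 * sign p2"
      using p by (simp add: sign_compose map_sum_perm_sign_l map_sum_perm_sign_r perm_finite)
    have "(\<Prod>i\<in>UNIV. ?X $ i $ map_sum p1 p2 i) = (\<Prod>i\<in>range Inl \<union> range Inr. ?X $ i $ map_sum p1 p2 i)"
      by (simp add: UNIV_sum)
    also have "\<dots> = (\<Prod>i\<in>range Inl. ?X $ i $ map_sum p1 p2 i) * (\<Prod>i\<in>range Inr. ?X $ i $ map_sum p1 p2 i)"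
      by (rule prod.union_disjoint) auto
    also have "\<dots> = (\<Prod>i\<in>UNIV. A $ i $ p1 i) * (\<Prod>i\<in>UNIV. C $ i $ p2 i)"
      by (simp add: prod.reindex blockdiag_def)
    finally show "?t (map_sum p1 p2) = (of_int (sign p1) * (\<Prod>i\<in>UNIV. A $ i $ p1 i)) * (of_int (sign p2) * (\<Prod>i\<in>UNIV. C $ i $ p2 i))"
      using s by (simp add: mult_ac)
  qed
  also have "\<dots> = det A * det C"
    unfolding det_def sum_product sum.cartesian_product by (simp add: case_prod_unfold)
  finally show ?thesis .
qed

lemma det_unit: "det (X :: 'r::comm_ring_1^unit^unit) = X $ () $ ()"
proof -
  have "{p. p permutes (UNIV::unit set)} = {id}"
    by (auto simp: permutes_def fun_eq_iff)
  then show ?thesis unfolding det_def by (simp add: UNIV_unit)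
qed

primrec pm :: "complex^'m^'m \<Rightarrow> complex list \<Rightarrow> complex^'m \<Rightarrow> complex^'m" where
  "pm A [] v = v"
| "pm A (\<beta>#L) v = A *v pm A L v - \<beta> *s pm A L v"

lemma pm_add: "pm A L (v + w) = pm A L v + pm A L w"
  by (induction L) (simp_all add: matrix_vector_right_distrib vector_add_ldistrib)

lemma pm_scale: "pm A L (c *s v) = c *s pm A L v"
  by (induction L) (simp_all add: vector_scalar_commute vector_ssub_ldistrib)

lemma pm_zero[simp]: "pm A L 0 = 0"
  by (induction L) simp_all

lemma pm_neg: "pm A L (- v) = - pm A L v"
proof -
  have "pm A L v + pm A L (- v) = 0" using pm_add[of A L v "-v"] by simp
  then show ?thesis using neg_eq_iff_add_eq_0[of "pm A L v" "pm A L (-v)"] by simp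
qed

lemma pm_diff: "pm A L (v - w) = pm A L v - pm A L w"
  by (simp only: diff_conv_add_uminus pm_add pm_neg)

lemma pm_sum: "finite S \<Longrightarrow> pm A L (\<Sum>j\<in>S. f j) = (\<Sum>j\<in>S. pm A L (f j))"
  by (induction S rule: finite_induct) (simp_all add: pm_add)

lemma pm_append: "pm A (L1 @ L2) v = pm A L1 (pm A L2 v)"
  by (induction L1) simp_all

lemma pm_Mv: "pm A L (A *v v) = A *v pm A L v"
  by (induction L) (simp_all add: matrix_vector_mult_diff_distrib vector_scalar_commute)

lemma pm_step_comm: "pm A L (A *v v - \<beta> *s v) = A *v pm A L v - \<beta> *s pm A L v"
  by (simp add: pm_diff pm_scale pm_Mv)

lemma pm_comm: "pm A L1 (pm A L2 v) = pm A L2 (pm A L1 v)"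
  by (induction L2) (simp_all add: pm_step_comm)

lemma pm_eig: assumes "A *v v = \<mu> *s v" shows "pm A L v = (\<Prod>\<kappa>\<leftarrow>L. \<mu> - \<kappa>) *s v"
proof (induction L)
  case (Cons \<beta> L)
  show ?case unfolding pm.simps Cons.IH vector_scalar_commute assms
    by (simp add: vec_eq_iff algebra_simps)
qed simp

lemma pm_funpow: "((\<lambda>x. A *v x - \<beta> *s x) ^^ k) v = pm A (replicate k \<beta>) v"
  by (induction k) simp_all

definition vconj :: "complex^'m \<Rightarrow> complex^'m" where
  "vconj v = (\<chi> i. cnj (v $ i))"

lemma vconj_vconj[simp]: "vconj (vconj v) = v"
  by (simp add: vconj_def vec_eq_iff)

lemma vconj_add: "vconj (v + w) = vconj v + vconj w"
  by (simp add: vconj_def vec_eq_iff)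

lemma vconj_diff: "vconj (v - w) = vconj v - vconj w"
  by (simp add: vconj_def vec_eq_iff)

lemma vconj_scale: "vconj (c *s v) = cnj c *s vconj v"
  by (simp add: vconj_def vec_eq_iff)

lemma vconj_zero[simp]: "vconj 0 = 0" and vconj_eq_0[simp]: "vconj v = 0 \<longleftrightarrow> v = 0"
  by (auto simp: vconj_def vec_eq_iff)

lemma vconj_sum: "vconj (\<Sum>j\<in>S. f j) = (\<Sum>j\<in>S. vconj (f j))"
  by (induction S rule: infinite_finite_induct) (simp_all add: vconj_add)

lemma vconj_Mv: "\<forall>i j. cnj (A$i$j) = A$i$j \<Longrightarrow> vconj (A *v v) = A *v vconj v"
  by (simp add: vconj_def vec_eq_iff matrix_vector_mult_def)

lemma pm_vconj: "\<forall>i j. cnj (A$i$j) = A$i$j \<Longrightarrow> vconj (pm A L v) = pm A (map cnj L) (vconj v)"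
  by (induction L) (simp_all add: vconj_diff vconj_scale vconj_Mv)

lemma pm_disjoint:
  assumes "pm A L v = 0" "pm A K v = 0" "set L \<inter> set K = {}"
  shows "v = 0"
  using assms
proof (induction L arbitrary: v)
  case Nil
  then show ?case by simp
next
  case (Cons \<beta> L)
  let ?u = "A *v v - \<beta> *s v"
  have h1: "pm A L ?u = 0"
    using Cons.prems(1) pm_step_comm[of A L v \<beta>] by (simp add: pm_comm[of A L "[\<beta>]"])
  have h2: "pm A K ?u = 0"
    using Cons.prems(2) pm_step_comm[of A K v \<beta>] by simp
  have "?u = 0" using Cons.IH[OF h1 h2] Cons.prems(3) by auto
  then have eig: "A *v v = \<beta> *s v" by simp
  have "pm A K v = (\<Prod>\<kappa>\<leftarrow>K. \<beta> - \<kappa>) *s v" by (rule pm_eig[OF eig])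
  moreover have "(\<Prod>\<kappa>\<leftarrow>K. \<beta> - \<kappa>) \<noteq> 0"
    using Cons.prems(3) by (auto simp: prod_list_zero_iff)
  ultimately show ?case using Cons.prems(2) by (simp add: vec_eq_iff)
qed

definition killedp :: "complex^'m^'m \<Rightarrow> complex^'m \<Rightarrow> bool" where
  "killedp A v \<longleftrightarrow> (\<exists>L. (\<forall>\<beta>\<in>set L. Im \<beta> > 0) \<and> pm A L v = 0)"

lemma killedp_zero: "killedp A 0"
  unfolding killedp_def by (rule exI[of _ "[]"]) simp

lemma killedp_add: assumes "killedp A v" "killedp A w" shows "killedp A (v + w)"
proof -
  obtain L1 where L1: "\<forall>\<beta>\<in>set L1. Im \<beta> > 0" "pm A L1 v = 0" using assms(1) killedp_def by blast
  obtain L2 where L2: "\<forall>\<beta>\<in>set L2. Im \<beta> > 0" "pm A L2 w = 0" using assms(2) killedp_def by blast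
  have "pm A (L1 @ L2) (v + w) = 0"
    by (simp add: pm_append pm_add L2(2)) (metis L1(2) pm_comm pm_zero)
  then show ?thesis unfolding killedp_def using L1 L2 by (intro exI[of _ "L1 @ L2"]) auto
qed

lemma killedp_scale: assumes "killedp A v" shows "killedp A (c *s v)"
  using assms unfolding killedp_def by (auto simp: pm_scale)

lemma killedp_sum: "(\<And>j. j \<in> S \<Longrightarrow> killedp A (f j)) \<Longrightarrow> killedp A (\<Sum>j\<in>S. f j)"
  by (induction S rule: infinite_finite_induct) (auto simp: killedp_zero killedp_add)

lemma core_indep:
  fixes A :: "complex^'m^'m" and ac :: "complex^'m" and b :: "'n::finite \<Rightarrow> complex^'m" and \<alpha> :: real
  assumes real: "\<forall>i j. cnj (A$i$j) = A$i$j"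
    and ac: "A *v ac = complex_of_real \<alpha> *s ac" "ac \<noteq> 0"
    and bk: "\<And>j. killedp A (b j)"
    and bind: "\<And>\<gamma>. (\<Sum>j\<in>UNIV. \<gamma> j *s b j) = 0 \<Longrightarrow> \<forall>j. \<gamma> j = 0"
    and eq: "\<xi> *s ac + (\<Sum>j\<in>UNIV. \<gamma> j *s b j) + (\<Sum>j\<in>UNIV. \<delta> j *s vconj (b j)) = 0"
  shows "\<xi> = 0 \<and> (\<forall>j. \<gamma> j = 0) \<and> (\<forall>j. \<delta> j = 0)"
proof -
  define y where "y = (\<Sum>j\<in>UNIV. \<gamma> j *s b j)"
  define z where "z = (\<Sum>j\<in>UNIV. cnj (\<delta> j) *s b j)"
  have y'z: "(\<Sum>j\<in>UNIV. \<delta> j *s vconj (b j)) = vconj z"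
    unfolding z_def vconj_sum by (simp add: vconj_scale)
  have "killedp A y" unfolding y_def by (intro killedp_sum killedp_scale bk)
  then obtain L1 where L1: "\<forall>\<beta>\<in>set L1. Im \<beta> > 0" "pm A L1 y = 0" using killedp_def by blast
  have "killedp A z" unfolding z_def by (intro killedp_sum killedp_scale bk)
  then obtain L2 where L2: "\<forall>\<beta>\<in>set L2. Im \<beta> > 0" "pm A L2 z = 0" using killedp_def by blast
  define L3 where "L3 = map cnj L2"
  have L3: "pm A L3 (vconj z) = 0" unfolding L3_def using pm_vconj[OF real, of L2 z] L2(2) by simp
  have L3i: "\<forall>\<beta>\<in>set L3. Im \<beta> < 0" unfolding L3_def using L2(1) by auto
  have eq2: "\<xi> *s ac + y + vconj z = 0" using eq y'z y_def by simp
  have "pm A (L1 @ L3) (\<xi> *s ac + y + vconj z) = 0" using eq2 by simp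
  moreover have "pm A (L1 @ L3) y = 0" by (simp add: pm_append) (metis L1(2) pm_comm pm_zero)
  moreover have "pm A (L1 @ L3) (vconj z) = 0" by (simp add: pm_append L3)
  ultimately have "\<xi> *s pm A (L1 @ L3) ac = 0" by (simp add: pm_add pm_scale)
  moreover have "pm A (L1 @ L3) ac = (\<Prod>\<kappa>\<leftarrow>L1 @ L3. complex_of_real \<alpha> - \<kappa>) *s ac"
    by (rule pm_eig[OF ac(1)])
  moreover have "(\<Prod>\<kappa>\<leftarrow>L1 @ L3. complex_of_real \<alpha> - \<kappa>) \<noteq> 0"
  proof
    assume "(\<Prod>\<kappa>\<leftarrow>L1 @ L3. complex_of_real \<alpha> - \<kappa>) = 0"
    then have "complex_of_real \<alpha> \<in> set (L1 @ L3)" by (auto simp: prod_list_zero_iff)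
    then show False using L1(1) L3i by force
  qed
  ultimately have xi: "\<xi> = 0" using ac(2) by (auto simp: vec_eq_iff)
  have yz: "y = - vconj z" using eq2 xi by (simp add: eq_neg_iff_add_eq_0)
  have "pm A L3 y = 0" using yz L3 by (simp add: pm_neg)
  moreover have "set L1 \<inter> set L3 = {}" using L1(1) L3i by force
  ultimately have y0: "y = 0" using pm_disjoint L1(2) by blast
  then have "z = 0" using yz by simp
  then have "\<forall>j. cnj (\<delta> j) = 0" using bind[of "\<lambda>j. cnj (\<delta> j)"] z_def by simp
  then show ?thesis using xi y0 bind y_def by auto
qed

lemma sum_option: "(\<Sum>k\<in>(UNIV::'a::finite option set). f k) = f None + (\<Sum>j\<in>UNIV. f (Some j))"
  by (simp add: UNIV_option_conv sum.reindex)

lemma sum_plus: "(\<Sum>k\<in>(UNIV::('a::finite + 'b::finite) set). f k) = (\<Sum>j\<in>UNIV. f (Inl j)) + (\<Sum>j\<in>UNIV. f (Inr j))"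
proof -
  have "(\<Sum>k\<in>(UNIV::('a + 'b) set). f k) = (\<Sum>k\<in>range Inl \<union> range Inr. f k)" by (simp add: UNIV_sum)
  also have "\<dots> = (\<Sum>k\<in>range Inl. f k) + (\<Sum>k\<in>range Inr. f k)" by (rule sum.union_disjoint) auto
  also have "\<dots> = (\<Sum>j\<in>UNIV. f (Inl j)) + (\<Sum>j\<in>UNIV. f (Inr j))" by (simp add: sum.reindex)
  finally show ?thesis .
qed

lemma sum_I: "(\<Sum>k\<in>(UNIV::('a::finite option + 'a option) set). f k) =
   f (Inl None) + (\<Sum>j\<in>UNIV. f (Inl (Some j))) + f (Inr None) + (\<Sum>j\<in>UNIV. f (Inr (Some j)))"
  by (simp add: sum_plus sum_option add_ac)

lemma sum_J: "(\<Sum>k\<in>(UNIV::('a::finite + unit) set). f k) = (\<Sum>i\<in>UNIV. f (Inl i)) + f (Inr ())"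
  by (simp add: sum_plus UNIV_unit)

lemma det_cnj: "det (\<chi> i j. cnj (X$i$j)) = cnj (det X)"
  unfolding det_def by (simp add: cnj_sum cnj_prod)

locale LA =
  fixes A :: "complex^'m::finite^'m" and \<alpha> :: real and ac :: "complex^'m"
    and b :: "'n::finite \<Rightarrow> complex^'m" and R :: "complex^'n^'n"
  assumes real: "\<forall>i j. cnj (A$i$j) = A$i$j"
    and ac_eig: "A *v ac = complex_of_real \<alpha> *s ac" and ac_ne: "ac \<noteq> 0"
    and ac_real: "vconj ac = ac"
    and bk: "\<And>j. killedp A (b j)"
    and bind: "\<And>\<gamma>. (\<Sum>j\<in>UNIV. \<gamma> j *s b j) = 0 \<Longrightarrow> \<forall>j. \<gamma> j = 0"
    and Rdef: "\<And>j. A *v b j = (\<Sum>l\<in>UNIV. R $ l $ j *s b l)"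
    and card: "CARD('m) = 2 * CARD('n) + 1"
begin

definition vin :: "complex^'m \<Rightarrow> complex^('m + unit)" where
  "vin v = (\<chi> r. case r of Inl i \<Rightarrow> v $ i | Inr _ \<Rightarrow> 0)"

definition col :: "'n option + 'n option \<Rightarrow> complex^('m + unit)" where
  "col k = (case k of Inl None \<Rightarrow> vin ac | Inl (Some j) \<Rightarrow> vin (b j)
             | Inr None \<Rightarrow> (\<chi> r. case r of Inl _ \<Rightarrow> 0 | Inr _ \<Rightarrow> 1)
             | Inr (Some j) \<Rightarrow> vin (vconj (b j)))"

lemma col_Inl[simp]: "col k $ Inl i = (case k of Inl None \<Rightarrow> ac $ i | Inl (Some j) \<Rightarrow> b j $ i
             | Inr None \<Rightarrow> 0 | Inr (Some j) \<Rightarrow> cnj (b j $ i))"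
  by (auto simp: col_def vin_def vconj_def split: sum.splits option.splits)

lemma col_Inr[simp]: "col k $ Inr u = (if k = Inr None then 1 else 0)"
  by (auto simp: col_def vin_def vconj_def split: sum.splits option.splits)

lemma col_indep:
  assumes "\<And>r. (\<Sum>k\<in>UNIV. y k * col k $ r) = 0"
  shows "y = (\<lambda>_. 0)"
proof -
  have r: "y (Inr None) = 0" using assms[of "Inr ()"] by (simp add: sum_I)
  have l: "y (Inl None) * ac $ i + (\<Sum>j\<in>UNIV. y (Inl (Some j)) * b j $ i) + (\<Sum>j\<in>UNIV. y (Inr (Some j)) * cnj (b j $ i)) = 0" for i
    using assms[of "Inl i"] by (simp add: sum_I)
  have "y (Inl None) *s ac + (\<Sum>j\<in>UNIV. y (Inl (Some j)) *s b j) + (\<Sum>j\<in>UNIV. y (Inr (Some j)) *s vconj (b j)) = 0"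
    using l by (simp add: vec_eq_iff vconj_def sum_component)
  from core_indep[OF real ac_eig ac_ne bk bind this]
  have "y (Inl None) = 0" "\<And>j. y (Inl (Some j)) = 0" "\<And>j. y (Inr (Some j)) = 0" by auto
  with r show ?thesis
  proof -
    show ?thesis
    proof
      fix k show "y k = 0"
        using r \<open>y (Inl None) = 0\<close> \<open>\<And>j. y (Inl (Some j)) = 0\<close> \<open>\<And>j. y (Inr (Some j)) = 0\<close>
        apply (cases k)
        subgoal for a by (cases a) auto
        subgoal for a by (cases a) auto
        done
    qed
  qed
qed

end

context LA
begin

definition e :: "'m + unit \<Rightarrow> 'n option + 'n option" where
  "e = (SOME e. bij e)"

lemma bij_e: "bij e"
proof -
  have "CARD('m + unit) = CARD('n option + 'n option)"
    using card by (simp add: card_sum)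
  then obtain h :: "'m + unit \<Rightarrow> 'n option + 'n option" where "bij_betw h UNIV UNIV"
    using finite_same_card_bij[of "UNIV::('m+unit) set" "UNIV::('n option + 'n option) set"] by auto
  then have "\<exists>h :: 'm + unit \<Rightarrow> 'n option + 'n option. bij h" by auto
  then show ?thesis unfolding e_def by (rule someI_ex)
qed

lemma sum_e: "(\<Sum>c\<in>UNIV. g (e c)) = (\<Sum>k\<in>UNIV. g k)"
proof -
  have "(\<Sum>k\<in>UNIV. g k) = (\<Sum>k\<in>e ` UNIV. g k)" using bij_e by (simp add: bij_is_surj)
  also have "\<dots> = (\<Sum>c\<in>UNIV. g (e c))" using bij_e by (simp add: sum.reindex bij_is_inj)
  finally show ?thesis by simp
qed

definition P :: "complex^('m+unit)^('m+unit)" where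
  "P = (\<chi> r c. col (e c) $ r)"

lemma det_P: "det P \<noteq> 0"
proof -
  have "inj ((*v) P)"
    unfolding vec.inj_iff_eq_0
  proof (intro allI impI)
    fix x assume x: "P *v x = 0"
    define y where "y k = x $ inv e k" for k
    have "(\<Sum>k\<in>UNIV. y k * col k $ r) = 0" for r
    proof -
      have "0 = (P *v x) $ r" using x by simp
      also have "\<dots> = (\<Sum>c\<in>UNIV. col (e c) $ r * x $ c)" by (simp add: P_def matrix_vector_mult_def)
      also have "\<dots> = (\<Sum>c\<in>UNIV. y (e c) * col (e c) $ r)"
        unfolding y_def using bij_e by (simp add: bij_is_inj mult.commute)
      also have "\<dots> = (\<Sum>k\<in>UNIV. y k * col k $ r)" by (rule sum_e)
      finally show ?thesis by simp
    qed
    then have "y = (\<lambda>_. 0)" by (rule col_indep)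
    then have "x $ c = 0" for c
      using fun_cong[of y _ "e c"] unfolding y_def using bij_e by (simp add: bij_is_inj)
    then show "x = 0" by (simp add: vec_eq_iff)
  qed
  then obtain B where "B ** P = mat 1" using matrix_left_invertible_injective by blast
  then have "det B * det P = 1" by (metis det_I det_mul)
  then show ?thesis by auto
qed

definition Bm :: "complex^('n option)^('n option)" where
  "Bm = (\<chi> i j. case i of None \<Rightarrow> (case j of None \<Rightarrow> complex_of_real \<alpha> | Some _ \<Rightarrow> 0)
                      | Some l \<Rightarrow> (case j of None \<Rightarrow> 0 | Some j' \<Rightarrow> R $ l $ j'))"

definition Dp :: "complex^('n option + 'n option)^('n option + 'n option)" where
  "Dp = blockdiag Bm (\<chi> i j. cnj (Bm $ i $ j))"

definition Nm :: "complex^('m + unit)^('m + unit)" where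
  "Nm = blockdiag A (\<chi> i j. complex_of_real \<alpha>)"

lemma Nm_col: "Nm *v col k0 = (\<Sum>k\<in>UNIV. Dp $ k $ k0 *s col k)"
proof -
  have NvL: "(Nm *v v) $ Inl i = (\<Sum>s\<in>UNIV. A $ i $ s * v $ Inl s)" for v i
    by (simp add: Nm_def blockdiag_def matrix_vector_mult_def sum_J)
  have NvR: "(Nm *v v) $ Inr u = complex_of_real \<alpha> * v $ Inr ()" for v u
    by (simp add: Nm_def blockdiag_def matrix_vector_mult_def sum_J)
  have A_ac: "(\<Sum>s\<in>UNIV. A $ i $ s * ac $ s) = complex_of_real \<alpha> * ac $ i" for i
    using ac_eig by (simp add: vec_eq_iff matrix_vector_mult_def)
  have A_b: "(\<Sum>s\<in>UNIV. A $ i $ s * b j $ s) = (\<Sum>l\<in>UNIV. R $ l $ j * b l $ i)" for i j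
    using Rdef[of j] by (simp add: vec_eq_iff matrix_vector_mult_def sum_component)
  have A_cb: "(\<Sum>s\<in>UNIV. A $ i $ s * cnj (b j $ s)) = (\<Sum>l\<in>UNIV. cnj (R $ l $ j) * cnj (b l $ i))" for i j
  proof -
    have "(\<Sum>s\<in>UNIV. A $ i $ s * cnj (b j $ s)) = cnj (\<Sum>s\<in>UNIV. A $ i $ s * b j $ s)"
      using real by (simp add: cnj_sum)
    also have "\<dots> = (\<Sum>l\<in>UNIV. cnj (R $ l $ j) * cnj (b l $ i))" by (simp add: A_b cnj_sum)
    finally show ?thesis .
  qed
  show ?thesis
  proof (cases k0)
    case (Inl k1)
    show ?thesis
    proof (cases k1)
      case None
      show ?thesis unfolding vec_eq_iff
      proof
        fix r show "(Nm *v col k0) $ r = (\<Sum>k\<in>UNIV. Dp $ k $ k0 *s col k) $ r"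
          using Inl None by (cases r) (simp_all add: NvL NvR sum_component sum_I Dp_def blockdiag_def Bm_def A_ac)
      qed
    next
      case (Some j)
      show ?thesis unfolding vec_eq_iff
      proof
        fix r show "(Nm *v col k0) $ r = (\<Sum>k\<in>UNIV. Dp $ k $ k0 *s col k) $ r"
          using Inl Some by (cases r) (simp_all add: NvL NvR sum_component sum_I Dp_def blockdiag_def Bm_def A_b)
      qed
    qed
  next
    case (Inr k1)
    show ?thesis
    proof (cases k1)
      case None
      show ?thesis unfolding vec_eq_iff
      proof
        fix r show "(Nm *v col k0) $ r = (\<Sum>k\<in>UNIV. Dp $ k $ k0 *s col k) $ r"
          using Inr None by (cases r) (simp_all add: NvL NvR sum_component sum_I Dp_def blockdiag_def Bm_def)
      qed
    next
      case (Some j)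
      show ?thesis unfolding vec_eq_iff
      proof
        fix r show "(Nm *v col k0) $ r = (\<Sum>k\<in>UNIV. Dp $ k $ k0 *s col k) $ r"
          using Inr Some by (cases r) (simp_all add: NvL NvR sum_component sum_I Dp_def blockdiag_def Bm_def A_cb)
      qed
    qed
  qed
qed

lemma det_relation: "det A * complex_of_real \<alpha> = det Bm * cnj (det Bm)"
proof -
  define D where "D = (\<chi> c c'. Dp $ e c $ e c')"
  have "Nm ** P = P ** D"
  proof -
    have "(Nm ** P) $ r $ c = (P ** D) $ r $ c" for r c
    proof -
      have "(Nm ** P) $ r $ c = (Nm *v col (e c)) $ r"
        by (simp add: matrix_matrix_mult_def matrix_vector_mult_def P_def)
      also have "\<dots> = (\<Sum>k\<in>UNIV. col k $ r * Dp $ k $ e c)"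
        by (simp add: Nm_col sum_component mult.commute)
      also have "\<dots> = (\<Sum>c'\<in>UNIV. col (e c') $ r * Dp $ e c' $ e c)"
        by (rule sum_e[symmetric])
      also have "\<dots> = (P ** D) $ r $ c"
        by (simp add: matrix_matrix_mult_def P_def D_def)
      finally show ?thesis .
    qed
    then show ?thesis by (simp add: vec_eq_iff)
  qed
  then have "det Nm * det P = det P * det D" by (metis det_mul)
  then have "det Nm = det D" using det_P by simp
  moreover have "det D = det Dp" unfolding D_def by (rule det_reindex[OF bij_e])
  moreover have "det Dp = det Bm * cnj (det Bm)"
    unfolding Dp_def det_blockdiag det_cnj ..
  moreover have "det Nm = det A * complex_of_real \<alpha>"
    unfolding Nm_def det_blockdiag det_unit by simp
  ultimately show ?thesis by simp
qed

end

context LA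
begin

definition uu :: "'m \<Rightarrow> complex^('n option)" where
  "uu i = (\<chi> c. case c of None \<Rightarrow> ac $ i | Some j \<Rightarrow> b j $ i)"

definition sw :: "'n option + 'n option \<Rightarrow> 'n option + 'n option" where
  "sw k = (case k of Inl None \<Rightarrow> Inl None | Inl (Some j) \<Rightarrow> Inr (Some j) | Inr None \<Rightarrow> Inr None | Inr (Some j) \<Rightarrow> Inl (Some j))"

lemma ac_cnj: "cnj (ac $ i) = ac $ i"
  using ac_real by (metis vconj_def vec_lambda_beta)

lemma col_cnj: "cnj (col k $ r) = col (sw k) $ r"
  by (cases r; cases k) (auto simp: sw_def ac_cnj split: option.splits)

lemma sw_sw: "sw (sw k) = k"
  by (auto simp: sw_def split: sum.splits option.splits)

lemma real_span:
  fixes p :: "complex^('n option)"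
  assumes "Im (p $ None) = 0"
  shows "\<exists>s::'m \<Rightarrow> real. p = (\<Sum>i\<in>UNIV. complex_of_real (s i) *s uu i)"
proof -
  define tgt where "tgt k = (case k of Inl None \<Rightarrow> p $ None | Inl (Some j) \<Rightarrow> p $ Some j
      | Inr None \<Rightarrow> 0 | Inr (Some j) \<Rightarrow> cnj (p $ Some j))" for k
  have tgt_sw: "cnj (tgt (sw k)) = tgt k" for k
  proof -
    have "cnj (p $ None) = p $ None" using assms by (simp add: complex_eq_iff)
    then show ?thesis by (auto simp: tgt_def sw_def split: sum.splits option.splits)
  qed
  define t where "t = (\<chi> c. tgt (e c))"
  have "invertible (transpose P)" using det_P by (simp add: invertible_det_nz)
  then obtain Q where Q: "transpose P ** Q = mat 1" unfolding invertible_def by blast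
  define \<sigma> where "\<sigma> = Q *v t"
  have s1: "transpose P *v \<sigma> = t" unfolding \<sigma>_def by (simp add: matrix_vector_mul_assoc Q)
  have TP: "(transpose P *v v) $ c = (\<Sum>r\<in>UNIV. col (e c) $ r * v $ r)" for v c
    by (simp add: matrix_vector_mult_def transpose_def P_def)
  have F: "(\<Sum>r\<in>UNIV. col k $ r * \<sigma> $ r) = tgt k" for k
  proof -
    have "(\<Sum>r\<in>UNIV. col (e (inv e k)) $ r * \<sigma> $ r) = tgt (e (inv e k))"
      using s1 TP[of \<sigma> "inv e k"] by (simp add: t_def)
    then show ?thesis using bij_e by (simp add: bij_is_surj surj_f_inv_f)
  qed
  have hv: "transpose P *v vconj \<sigma> = t"
  proof -
    have "(transpose P *v vconj \<sigma>) $ c = t $ c" for c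
    proof -
      have "(transpose P *v vconj \<sigma>) $ c = (\<Sum>r\<in>UNIV. col (e c) $ r * cnj (\<sigma> $ r))"
        by (subst TP) (simp add: vconj_def)
      also have "\<dots> = cnj (\<Sum>r\<in>UNIV. col (sw (e c)) $ r * \<sigma> $ r)"
        by (simp add: cnj_sum col_cnj[symmetric])
      also have "\<dots> = tgt (e c)" by (simp add: F tgt_sw)
      finally show ?thesis by (simp add: t_def)
    qed
    then show ?thesis by (simp add: vec_eq_iff)
  qed
  have hinj: "inj ((*v) (transpose P))"
    using \<open>invertible (transpose P)\<close> by (rule inj_matrix_vector_mult)
  have "vconj \<sigma> = \<sigma>" by (rule injD[OF hinj]) (simp only: hv s1)
  then have sr: "cnj (\<sigma> $ r) = \<sigma> $ r" for r by (metis vconj_def vec_lambda_beta)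
  define s where "s i = Re (\<sigma> $ Inl i)" for i
  have sc: "complex_of_real (s i) = \<sigma> $ Inl i" for i
    using sr[of "Inl i"] unfolding s_def by (simp add: complex_eq_iff)
  have "p = (\<Sum>i\<in>UNIV. complex_of_real (s i) *s uu i)"
  proof -
    have "p $ c = (\<Sum>i\<in>UNIV. complex_of_real (s i) *s uu i) $ c" for c
    proof (cases c)
      case None
      have "p $ None = tgt (Inl None)" by (simp add: tgt_def)
      also have "\<dots> = (\<Sum>r\<in>UNIV. col (Inl None) $ r * \<sigma> $ r)" by (simp add: F)
      also have "\<dots> = (\<Sum>i\<in>UNIV. complex_of_real (s i) *s uu i) $ None"
        by (simp add: sum_J sum_component uu_def sc mult.commute)
      finally show ?thesis using None by simp
    next
      case (Some j)
      have "p $ Some j = tgt (Inl (Some j))" by (simp add: tgt_def)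
      also have "\<dots> = (\<Sum>r\<in>UNIV. col (Inl (Some j)) $ r * \<sigma> $ r)" by (simp add: F)
      also have "\<dots> = (\<Sum>i\<in>UNIV. complex_of_real (s i) *s uu i) $ Some j"
        by (simp add: sum_J sum_component uu_def sc mult.commute)
      finally show ?thesis using Some by simp
    qed
    then show ?thesis by (simp add: vec_eq_iff)
  qed
  then show ?thesis by blast
qed

end

lemma linear_scale_vec: "linear (\<lambda>h::complex. h *s (v::complex^'k))"
proof (rule linearI)
  show "(x + y) *s v = x *s v + y *s v" for x y by (simp add: vec_eq_iff algebra_simps)
  show "(r *\<^sub>R x) *s v = r *\<^sub>R (x *s v)" for r x by (simp add: vec_eq_iff)
qed

lemma has_derivative_line:
  "((\<lambda>\<zeta>::complex. p + \<zeta> *s (v::complex^'k)) has_derivative (\<lambda>h. h *s v)) (at \<zeta>)"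
proof -
  have "bounded_linear (\<lambda>h::complex. h *s v)" using linear_scale_vec linear_conv_bounded_linear by blast
  then have "((\<lambda>h::complex. h *s v) has_derivative (\<lambda>h. h *s v)) (at \<zeta>)"
    by (rule bounded_linear_imp_has_derivative)
  then show ?thesis by (intro has_derivative_add_const[where c=p, simplified add.commute] ) (simp add: add.commute)
qed

lemma holo_line:
  assumes hf: "holo f S" and T: "open T" and inS: "\<And>\<zeta>. \<zeta> \<in> T \<Longrightarrow> p + \<zeta> *s v \<in> S"
  shows "(\<lambda>\<zeta>. f (p + \<zeta> *s v)) holomorphic_on T"
  unfolding holomorphic_on_open[OF T]
proof
  fix \<zeta> assume z: "\<zeta> \<in> T"
  obtain L where L: "(f has_derivative L) (at (p + \<zeta> *s v))" "\<And>c w. L (c *s w) = c * L w"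
    using hf inS[OF z] unfolding holo_def by blast
  have "((\<lambda>\<zeta>. f (p + \<zeta> *s v)) has_derivative L \<circ> (\<lambda>h. h *s v)) (at \<zeta>)"
    using diff_chain_at[OF has_derivative_line L(1)] by (simp add: comp_def)
  moreover have "L \<circ> (\<lambda>h. h *s v) = (*) (L v)"
    using L(2) by (auto simp: fun_eq_iff mult.commute)
  ultimately show "\<exists>f'. ((\<lambda>\<zeta>. f (p + \<zeta> *s v)) has_field_derivative f') (at \<zeta>)"
    unfolding has_field_derivative_def by auto
qed

lemma holo_continuous: "holo f S \<Longrightarrow> continuous_on S f"
  unfolding holo_def
  by (meson continuous_at_imp_continuous_on has_derivative_continuous)

lemma small_periods_const:
  fixes \<phi> :: "complex \<Rightarrow> complex" and \<epsilon> :: "nat \<Rightarrow> real"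
  assumes hol: "\<phi> holomorphic_on {w. Im w > 0}"
    and nz: "\<And>n. \<epsilon> n \<noteq> 0" and lim: "\<epsilon> \<longlonglongrightarrow> 0"
    and per: "\<And>n w. Im w > 0 \<Longrightarrow> \<phi> (w + complex_of_real (\<epsilon> n)) = \<phi> w"
  shows "\<exists>c. \<forall>w. Im w > 0 \<longrightarrow> \<phi> w = c"
proof -
  have op: "open {w. Im w > 0}" by (simp add: open_halfspace_Im_gt)
  have deriv0: "(\<phi> has_field_derivative 0) (at w within {w. Im w > 0})" if w: "w \<in> {w. Im w > 0}" for w
  proof -
    obtain d where d: "(\<phi> has_field_derivative d) (at w)"
      using hol w unfolding holomorphic_on_open[OF op] by auto
    then have t: "((\<lambda>y. (\<phi> y - \<phi> w) / (y - w)) \<longlongrightarrow> d) (at w within UNIV)"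
      using has_field_derivative_iff by blast
    define X where "X n = w + complex_of_real (\<epsilon> n)" for n
    have Xl: "X \<longlonglongrightarrow> w" unfolding X_def
      using tendsto_add[OF tendsto_const tendsto_of_real[OF lim], of w] by simp
    have Xn: "\<And>i. X i \<in> UNIV - {w}" using nz by (simp add: X_def)
    have c: "((\<lambda>y. (\<phi> y - \<phi> w) / (y - w)) \<circ> X) \<longlonglongrightarrow> d"
      using tendsto_at_iff_sequentially[THEN iffD1, OF t, rule_format, OF Xn Xl] .
    have "((\<lambda>y. (\<phi> y - \<phi> w) / (y - w)) \<circ> X) = (\<lambda>_. 0)"
      using per w by (simp add: X_def fun_eq_iff)
    with c have "(\<lambda>_. 0::complex) \<longlonglongrightarrow> d" by simp
    then have "d = 0" by (simp add: LIMSEQ_const_iff)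
    then show ?thesis using d has_field_derivative_at_within by blast
  qed
  have "\<exists>c. \<forall>x\<in>{w. Im w > 0}. \<phi> x = c"
    by (rule has_field_derivative_zero_constant[OF convex_halfspace_Im_gt deriv0])
  then show ?thesis by auto
qed

lemma periods_from_scaling:
  fixes \<Phi> :: "complex \<Rightarrow> 'v" and \<alpha> :: real and p0 :: real
  assumes apos: "\<alpha> > 0" and a1: "\<alpha> \<noteq> 1" and injA: "inj Aop"
    and rel: "\<And>w. Im w > 0 \<Longrightarrow> \<Phi> w = Aop (\<Phi> (complex_of_real \<alpha> * w))"
    and p0: "p0 \<noteq> 0" and per0: "\<And>w. Im w > 0 \<Longrightarrow> \<Phi> (w + complex_of_real p0) = \<Phi> w"
  shows "\<exists>\<epsilon>::nat\<Rightarrow>real. (\<forall>n. \<epsilon> n \<noteq> 0) \<and> \<epsilon> \<longlonglongrightarrow> 0 \<and> (\<forall>n w. Im w > 0 \<longrightarrow> \<Phi> (w + complex_of_real (\<epsilon> n)) = \<Phi> w)"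
proof (cases "\<alpha> > 1")
  case True
  define \<epsilon> where "\<epsilon> n = p0 * (1/\<alpha>) ^ n" for n
  have "\<epsilon> \<longlonglongrightarrow> p0 * 0" unfolding \<epsilon>_def
    by (intro tendsto_mult tendsto_const LIMSEQ_power_zero) (use True in simp)
  moreover have "\<epsilon> n \<noteq> 0" for n using p0 apos by (simp add: \<epsilon>_def)
  moreover have "\<forall>w. Im w > 0 \<longrightarrow> \<Phi> (w + complex_of_real (\<epsilon> n)) = \<Phi> w" for n
  proof (induction n)
    case 0
    then show ?case using per0 by (simp add: \<epsilon>_def)
  next
    case (Suc n)
    show ?case
    proof (intro allI impI)
      fix w :: complex assume w: "Im w > 0"
      have aw: "Im (complex_of_real \<alpha> * w) > 0" using w apos by simp
      have e: "complex_of_real \<alpha> * (w + complex_of_real (\<epsilon> (Suc n))) = complex_of_real \<alpha> * w + complex_of_real (\<epsilon> n)"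
        using apos by (simp add: \<epsilon>_def algebra_simps)
      have w2: "Im (w + complex_of_real (\<epsilon> (Suc n))) > 0" using w by simp
      have "\<Phi> (w + complex_of_real (\<epsilon> (Suc n))) = Aop (\<Phi> (complex_of_real \<alpha> * w + complex_of_real (\<epsilon> n)))"
        using rel[OF w2] e by simp
      also have "\<dots> = Aop (\<Phi> (complex_of_real \<alpha> * w))" using Suc.IH aw by simp
      also have "\<dots> = \<Phi> w" using rel[OF w] by simp
      finally show "\<Phi> (w + complex_of_real (\<epsilon> (Suc n))) = \<Phi> w" .
    qed
  qed
  ultimately show ?thesis by (intro exI[of _ \<epsilon>]) auto
next
  case False
  then have al: "\<alpha> < 1" using a1 by simp
  define \<epsilon> where "\<epsilon> n = p0 * \<alpha> ^ n" for n
  have "\<epsilon> \<longlonglongrightarrow> p0 * 0" unfolding \<epsilon>_def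
    by (intro tendsto_mult tendsto_const LIMSEQ_power_zero) (use al apos in simp)
  moreover have "\<epsilon> n \<noteq> 0" for n using p0 apos by (simp add: \<epsilon>_def)
  moreover have "\<forall>w. Im w > 0 \<longrightarrow> \<Phi> (w + complex_of_real (\<epsilon> n)) = \<Phi> w" for n
  proof (induction n)
    case 0
    then show ?case using per0 by (simp add: \<epsilon>_def)
  next
    case (Suc n)
    show ?case
    proof (intro allI impI)
      fix w :: complex assume w: "Im w > 0"
      define w' where "w' = w / complex_of_real \<alpha>"
      have w': "Im w' > 0" using w apos by (simp add: w'_def Im_divide_of_real)
      have aw': "complex_of_real \<alpha> * w' = w" using apos by (simp add: w'_def)
      have w2: "Im (w' + complex_of_real (\<epsilon> n)) > 0" using w' by simp
      have e: "complex_of_real \<alpha> * (w' + complex_of_real (\<epsilon> n)) = w + complex_of_real (\<epsilon> (Suc n))"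
        using aw' by (simp add: \<epsilon>_def algebra_simps)
      have "Aop (\<Phi> (w + complex_of_real (\<epsilon> (Suc n)))) = \<Phi> (w' + complex_of_real (\<epsilon> n))"
        using rel[OF w2] e by simp
      also have "\<dots> = \<Phi> w'" using Suc.IH w' by simp
      also have "\<dots> = Aop (\<Phi> w)" using rel[OF w'] aw' by simp
      finally show "\<Phi> (w + complex_of_real (\<epsilon> (Suc n))) = \<Phi> w" using injA by (simp add: inj_eq)
    qed
  qed
  ultimately show ?thesis by (intro exI[of _ \<epsilon>]) auto
qed

definition emb :: "complex \<Rightarrow> complex^('n::finite option)" where
  "emb w = (\<chi> c. if c = None then w else 0)"

lemma emb_None[simp]: "emb w $ None = w"
  by (simp add: emb_def)

lemma upper_domain_iff: "p \<in> upper_domain \<longleftrightarrow> Im (p $ None) > 0"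
  by (simp add: upper_domain_def)

lemma z_indep:
  fixes f :: "complex^('n::finite option) \<Rightarrow> complex" and u :: "'m::finite \<Rightarrow> complex^('n option)"
  assumes hf: "holo f upper_domain"
    and ureal: "\<And>i. Im (u i $ None) = 0"
    and per: "\<And>i p. p \<in> upper_domain \<Longrightarrow> f (p + u i) = f p"
    and span: "\<And>q. Im (q $ None) = 0 \<Longrightarrow> \<exists>s::'m\<Rightarrow>real. q = (\<Sum>i\<in>UNIV. complex_of_real (s i) *s u i)"
    and p: "p \<in> upper_domain"
  shows "f p = f (emb (p $ None))"
proof -
  define Ts where "Ts = {v. Im (v $ None) = 0 \<and> (\<forall>q\<in>upper_domain. f (q + v) = f q)}"
  have T0: "0 \<in> Ts" by (simp add: Ts_def)
  have Tadd: "v + w \<in> Ts" if "v \<in> Ts" "w \<in> Ts" for v w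
  proof -
    have "f (q + (v + w)) = f q" if q: "q \<in> upper_domain" for q
    proof -
      have "q + v \<in> upper_domain" using q \<open>v \<in> Ts\<close> by (simp add: Ts_def upper_domain_iff)
      then have "f ((q + v) + w) = f (q + v)" using \<open>w \<in> Ts\<close> by (simp add: Ts_def)
      also have "\<dots> = f q" using q \<open>v \<in> Ts\<close> by (simp add: Ts_def)
      finally show ?thesis by (simp add: add.assoc)
    qed
    then show ?thesis using that by (simp add: Ts_def)
  qed
  have Tneg: "- v \<in> Ts" if "v \<in> Ts" for v
  proof -
    have "f (q + - v) = f q" if q: "q \<in> upper_domain" for q
    proof -
      have "q - v \<in> upper_domain" using q \<open>v \<in> Ts\<close> by (simp add: Ts_def upper_domain_iff)
      then have "f ((q - v) + v) = f (q - v)" using \<open>v \<in> Ts\<close> unfolding Ts_def by blast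
      then show ?thesis by simp
    qed
    then show ?thesis using that by (simp add: Ts_def)
  qed
  have Tu: "u i \<in> Ts" for i using ureal per by (simp add: Ts_def)
  have Tnat: "of_nat k *s v \<in> Ts" if "v \<in> Ts" for k v
  proof (induction k)
    case 0 then show ?case using T0 by simp
  next
    case (Suc k)
    have "of_nat (Suc k) *s v = of_nat k *s v + v" by (simp add: vec_eq_iff algebra_simps)
    then show ?case using Tadd[OF Suc that] by (simp add: add.commute)
  qed
  have Tint: "of_int z *s v \<in> Ts" if "v \<in> Ts" for z v
  proof (cases z rule: int_cases)
    case (nonneg n)
    then show ?thesis using Tnat[OF that, of n] by simp
  next
    case (neg n)
    have "of_int z *s v = - (of_nat (Suc n) *s v)" using neg by (simp add: vec_eq_iff)
    then show ?thesis using Tneg[OF Tnat[OF that, of "Suc n"]] by metis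
  qed
  have Tsum: "(\<Sum>i\<in>S. of_int (n i) *s u i) \<in> Ts" for S n
    by (induction S rule: infinite_finite_induct) (auto intro: T0 Tadd Tint Tu)
  have hcont: "continuous_on upper_domain f" by (rule holo_continuous[OF hf])
  define t where "t = Im (p $ None)"
  have tpos: "t > 0" using p by (simp add: t_def upper_domain_iff)
  define c0 :: "complex^('n option)" where "c0 = (\<chi> c. if c = None then \<i> * complex_of_real t else 0)"
  define g where "g s = (\<Sum>i\<in>UNIV. (s $ i) *\<^sub>R u i) + c0" for s :: "real^'m"
  have gcont: "continuous_on UNIV g" unfolding g_def by (intro continuous_intros)
  have g_None: "Im (g s $ None) = t" for s
    using ureal by (simp add: g_def c0_def sum_component Im_sum)
  define K where "K = g ` cbox 0 (\<chi> i. 1)"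
  have Kc: "compact K" unfolding K_def
    by (rule compact_continuous_image) (use gcont continuous_on_subset in auto)
  have KD: "K \<subseteq> upper_domain" using g_None tpos by (auto simp: K_def upper_domain_iff)
  have "compact (f ` K)" by (rule compact_continuous_image[OF continuous_on_subset[OF hcont KD] Kc])
  then obtain B where B: "\<And>x. x \<in> K \<Longrightarrow> norm (f x) \<le> B"
    using compact_imp_bounded bounded_iff by (metis image_eqI)
  have bnd: "norm (f q) \<le> B" if q: "Im (q $ None) = t" for q
  proof -
    have "Im ((q - c0) $ None) = 0" using q by (simp add: c0_def)
    then obtain s where s: "q - c0 = (\<Sum>i\<in>UNIV. complex_of_real (s i) *s u i)" using span by blast
    define r :: "real^'m" where "r = (\<chi> i. s i - of_int (floor (s i)))"
    have rK: "g r \<in> K" unfolding K_def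
      by (rule imageI) (auto simp: r_def mem_box_cart of_int_floor_le intro: less_imp_le[OF frac_lt_1[unfolded frac_def]])
    have "q = g r + (\<Sum>i\<in>UNIV. of_int (floor (s i)) *s u i)"
    proof -
      have "q = (\<Sum>i\<in>UNIV. complex_of_real (s i) *s u i) + c0" using s by (simp add: algebra_simps)
      also have "\<dots> = g r + (\<Sum>i\<in>UNIV. of_int (floor (s i)) *s u i)"
        apply (simp add: g_def r_def vec_eq_iff sum_component vector_scaleR_component)
        apply (simp add: scaleR_conv_of_real algebra_simps sum.distrib[symmetric])
        done
      finally show ?thesis .
    qed
    then have "f q = f (g r)" using Tsum[where S=UNIV and n="\<lambda>i. floor (s i)"] rK KD by (auto simp: Ts_def)
    then show ?thesis using B[OF rK] by simp
  qed
  define v where "v = p - emb (p $ None)"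
  have vN: "v $ None = 0" by (simp add: v_def)
  define h where "h \<zeta> = f (emb (p $ None) + \<zeta> *s v)" for \<zeta>
  have hol: "h holomorphic_on UNIV" unfolding h_def
    by (rule holo_line[OF hf open_UNIV]) (use p vN in \<open>simp add: upper_domain_iff\<close>)
  have "bounded (range h)" unfolding bounded_iff
    by (rule exI[of _ B]) (use vN bnd in \<open>auto simp: h_def t_def\<close>)
  then have "h constant_on UNIV" using Liouville_theorem hol by blast
  then have "h 1 = h 0" unfolding constant_on_def by auto
  moreover have "h 1 = f p" by (simp add: h_def v_def)
  moreover have "h 0 = f (emb (p $ None))" by (simp add: h_def)
  ultimately show ?thesis by simp
qed

lemma emb_line: "emb w = 0 + w *s axis None 1"
  by (simp add: emb_def vec_eq_iff axis_def)

lemma const_family: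
  fixes F :: "'k \<Rightarrow> complex^('n::finite option) \<Rightarrow> complex" and u :: "'m::finite \<Rightarrow> complex^('n option)"
    and Aop :: "('k \<Rightarrow> complex) \<Rightarrow> ('k \<Rightarrow> complex)"
  assumes hf: "\<And>k. holo (F k) upper_domain"
    and ureal: "\<And>i. Im (u i $ None) = 0"
    and per: "\<And>k i p. p \<in> upper_domain \<Longrightarrow> F k (p + u i) = F k p"
    and span: "\<And>q. Im (q $ None) = 0 \<Longrightarrow> \<exists>s::'m\<Rightarrow>real. q = (\<Sum>i\<in>UNIV. complex_of_real (s i) *s u i)"
    and apos: "\<alpha> > 0" and a1: "\<alpha> \<noteq> 1" and injA: "inj Aop"
    and rel: "\<And>w. Im w > 0 \<Longrightarrow> (\<lambda>k. F k (emb w)) = Aop (\<lambda>k. F k (emb (complex_of_real \<alpha> * w)))"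
    and p0: "p0 \<noteq> 0" and up0: "u i0 $ None = complex_of_real p0"
  shows "\<exists>C. \<forall>k. \<forall>p\<in>upper_domain. F k p = C k"
proof -
  have zi: "F k p = F k (emb (p $ None))" if "p \<in> upper_domain" for k p
    by (rule z_indep[OF hf ureal per span that])
  define \<Phi> where "\<Phi> w = (\<lambda>k. F k (emb w))" for w
  have per0: "\<Phi> (w + complex_of_real p0) = \<Phi> w" if w: "Im w > 0" for w
  proof -
    have ew: "emb w \<in> upper_domain" using w by (simp add: upper_domain_iff)
    have ewu: "emb w + u i0 \<in> upper_domain" using w ureal[of i0] by (simp add: upper_domain_iff)
    have "F k (emb (w + complex_of_real p0)) = F k (emb w)" for k
    proof -
      have "F k (emb w + u i0) = F k (emb ((emb w + u i0) $ None))" by (rule zi[OF ewu])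
      then have "F k (emb (w + complex_of_real p0)) = F k (emb w + u i0)" by (simp add: up0)
      also have "\<dots> = F k (emb w)" by (rule per[OF ew])
      finally show ?thesis .
    qed
    then show ?thesis by (simp add: \<Phi>_def)
  qed
  obtain \<epsilon> where eps: "\<And>n. \<epsilon> n \<noteq> 0" "\<epsilon> \<longlonglongrightarrow> 0"
      "\<And>n w. Im w > 0 \<Longrightarrow> \<Phi> (w + complex_of_real (\<epsilon> n)) = \<Phi> w"
    using periods_from_scaling[of \<alpha> Aop \<Phi> p0, OF apos a1 injA _ p0 per0] rel unfolding \<Phi>_def by blast
  have "\<exists>c. \<forall>w. Im w > 0 \<longrightarrow> F k (emb w) = c" for k
  proof (rule small_periods_const[OF _ eps(1,2)])
    show "(\<lambda>w. F k (emb w)) holomorphic_on {w. 0 < Im w}"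
      unfolding emb_line
      by (rule holo_line[OF hf open_halfspace_Im_gt]) (simp add: upper_domain_iff emb_line[symmetric])
    show "F k (emb (w + complex_of_real (\<epsilon> n))) = F k (emb w)" if "Im w > 0" for n w
      using eps(3)[OF that, of n] unfolding \<Phi>_def by meson
  qed
  then obtain C where C: "\<And>k w. Im w > 0 \<Longrightarrow> F k (emb w) = C k" by metis
  have "\<forall>k. \<forall>p\<in>upper_domain. F k p = C k"
    using zi C by (auto simp: upper_domain_iff)
  then show ?thesis by blast
qed

lemma sum_delta_mult[simp]: fixes f :: "'b::finite \<Rightarrow> 'a::comm_semiring_1" shows "(\<Sum>j\<in>UNIV. f j * (if j = k then 1 else 0)) = (f k :: 'a::comm_semiring_1)"
proof -
  have "(\<Sum>j\<in>UNIV. f j * (if j = k then 1 else 0)) = (\<Sum>j\<in>UNIV. if k = j then f j else 0)"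
    by (rule sum.cong) auto
  also have "\<dots> = f k" by simp
  finally show ?thesis .
qed

context LA
begin

lemma R_noeig:
  assumes only_real: "\<forall>\<mu>. ceigenvalue A \<mu> \<and> Im \<mu> = 0 \<longrightarrow> \<mu> = complex_of_real \<alpha>"
    and mu: "Im \<mu> = 0" "\<mu> \<noteq> complex_of_real \<alpha>"
    and ev: "\<And>j. (\<Sum>l\<in>UNIV. R $ j $ l * x l) = \<mu> * x j"
  shows "x l = 0"
proof -
  define y where "y = (\<Sum>l\<in>UNIV. x l *s b l)"
  have "A *v y = \<mu> *s y"
  proof -
    have "A *v y = (\<Sum>l\<in>UNIV. x l *s (A *v b l))"
      by (simp add: y_def vec.sum vector_scalar_commute)
    also have "\<dots> = (\<Sum>l\<in>UNIV. x l *s (\<Sum>j\<in>UNIV. R $ j $ l *s b j))" by (simp add: Rdef)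
    also have "\<dots> = (\<Sum>j\<in>UNIV. (\<Sum>l\<in>UNIV. R $ j $ l * x l) *s b j)"
    proof -
      have sw: "(\<Sum>l\<in>UNIV. \<Sum>j\<in>UNIV. x l * (R $ j $ l * b j $ i)) = (\<Sum>j\<in>UNIV. \<Sum>l\<in>UNIV. x l * (R $ j $ l * b j $ i))" for i
        by (rule sum.swap)
      show ?thesis
        apply (simp add: vec_eq_iff sum_component sum_distrib_left sum_distrib_right mult_ac)
        apply (rule allI)
        apply (rule sum.swap)
        done
    qed
    also have "\<dots> = (\<Sum>j\<in>UNIV. (\<mu> * x j) *s b j)" by (simp add: ev)
    also have "\<dots> = \<mu> *s y" by (simp add: y_def vec_eq_iff sum_component sum_distrib_left mult_ac)
    finally show ?thesis .
  qed
  then have "y = 0" using only_real mu unfolding ceigenvalue_def by blast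
  then show ?thesis using bind[of x] y_def by simp
qed

lemma cjac_g0: "cjac (g0 \<alpha> R) = det Bm"
proof -
  have "(\<chi> i j. g0 \<alpha> R (axis j 1) $ i) = transpose Bm"
    by (auto simp: vec_eq_iff g0_def transpose_def Bm_def axis_def split: option.splits)
  then show ?thesis unfolding cjac_def by simp
qed

end

lemma form_at_axis: "form_at c q (axis k 1) = c k q"
  by (simp add: form_at_def axis_def)

lemma form_at_sum_option: "form_at c q v = c None q * v $ None + (\<Sum>l\<in>UNIV. c (Some l) q * v $ Some l)"
  by (simp add: form_at_def sum_option)

lemma g0_axis_None: "g0 \<alpha> R (axis None 1) = (\<chi> i. case i of None \<Rightarrow> complex_of_real \<alpha> | Some _ \<Rightarrow> 0)"
  by (auto simp: vec_eq_iff g0_def axis_def split: option.splits)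

lemma g0_axis_Some: "g0 \<alpha> R (axis (Some j) 1) = (\<chi> i. case i of None \<Rightarrow> 0 | Some l \<Rightarrow> R $ j $ l)"
  by (auto simp: vec_eq_iff g0_def axis_def split: option.splits)

lemma g0_emb: "g0 \<alpha> R (emb w) = emb (complex_of_real \<alpha> * w)"
  by (auto simp: vec_eq_iff g0_def emb_def split: option.splits)

lemma g0_linear: "linear (g0 \<alpha> R)"
proof (rule linearI)
  show "g0 \<alpha> R (x + y) = g0 \<alpha> R x + g0 \<alpha> R y" for x y
    by (auto simp: vec_eq_iff g0_def algebra_simps sum.distrib split: option.splits)
  show "g0 \<alpha> R (r *\<^sub>R x) = r *\<^sub>R g0 \<alpha> R x" for r x
    apply (simp add: vec_eq_iff g0_def vector_scaleR_component split: option.splits)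
    apply (simp add: scaleR_conv_of_real sum_distrib_left mult_ac)
    done
qed

lemma g0_deriv: "(g0 \<alpha> R has_derivative g0 \<alpha> R) (at p)"
  using g0_linear linear_conv_bounded_linear bounded_linear_imp_has_derivative by blast

lemma trans_deriv: "((\<lambda>p. p + c) has_derivative id) (at p)"
  unfolding id_def by (intro derivative_eq_intros) auto

lemma cjac_id: "cjac id = 1"
proof -
  have e: "(\<chi> i j. id (axis j 1) $ i) = (mat 1 :: complex^'k^'k)"
    by (simp add: vec_eq_iff axis_def mat_def)
  show ?thesis unfolding cjac_def e by (rule det_I)
qed

lemma g0_in_G: "g0 \<alpha> R \<in> gen_group (generators \<alpha> R a b)"
  using gg_gen[OF gg_id, of "g0 \<alpha> R" "generators \<alpha> R a b"] by (simp add: generators_def)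

lemma trans_in_G: "(\<lambda>p. p + uvec a b i) \<in> gen_group (generators \<alpha> R a b)"
  using gg_gen[OF gg_id, of "\<lambda>p. p + uvec a b i" "generators \<alpha> R a b"] by (simp add: generators_def)

lemma det_of_int: "det (\<chi> i j. complex_of_int (M $ i $ j)) = complex_of_int (det M)"
  unfolding det_def by (simp add: of_int_sum of_int_prod)

theorem proposition4p2:
  fixes M :: "int^'m^'m" and \<alpha> :: real and a :: "real^'m"
    and b :: "'n::finite \<Rightarrow> complex^'m" and R :: "complex^'n^'n"
  defines "Mc \<equiv> (\<chi> i j. complex_of_int (M $ i $ j)) :: complex^'m^'m"
  defines "W \<equiv> vec.span (\<Union>{gen_eigenspace Mc \<beta> | \<beta>. ceigenvalue Mc \<beta> \<and> Im \<beta> > 0})"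
  defines "G \<equiv> gen_group (generators \<alpha> R a b)"
  assumes dim: "CARD('m) = 2 * CARD('n) + 1"
    and detM: "det M = 1"
    and alpha_pos: "\<alpha> > 0" and alpha_ne1: "\<alpha> \<noteq> 1"
    and only_real: "\<forall>\<mu>. ceigenvalue Mc \<mu> \<and> Im \<mu> = 0 \<longrightarrow> \<mu> = complex_of_real \<alpha>"
    and simple: "vec.dim (gen_eigenspace Mc (complex_of_real \<alpha>)) = 1"
    and a_eig: "a \<noteq> 0" "(\<chi> i j. real_of_int (M $ i $ j)) *v a = \<alpha> *s a"
    and b_basis: "inj b" "vec.independent (range b)" "vec.span (range b) = W"
    and R_def: "\<forall>j. Mc *v b j = (\<Sum>l\<in>UNIV. R $ l $ j *s b l)"
  shows "(\<forall>c. invariant_holo_1form G upper_domain c \<longrightarrow> (\<forall>i. \<forall>p\<in>upper_domain. c i p = 0))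
       \<and> (\<forall>k h. k > 0 \<longrightarrow> invariant_pluricanonical G upper_domain k h \<longrightarrow> (\<forall>p\<in>upper_domain. h p = 0))"
proof -
  define ac :: "complex^'m" where "ac = (\<chi> i. complex_of_real (a $ i))"
  have real: "\<forall>i j. cnj (Mc$i$j) = Mc$i$j" by (simp add: Mc_def)
  have ac_eig: "Mc *v ac = complex_of_real \<alpha> *s ac"
  proof -
    have r: "(\<Sum>j\<in>UNIV. real_of_int (M$i$j) * a$j) = \<alpha> * a$i" for i
      using a_eig(2) by (simp add: vec_eq_iff matrix_vector_mult_def)
    have "(\<Sum>j\<in>UNIV. complex_of_int (M$i$j) * complex_of_real (a$j)) = complex_of_real \<alpha> * complex_of_real (a$i)" for i
    proof -
      have "complex_of_real (\<Sum>j\<in>UNIV. real_of_int (M$i$j) * a$j) = complex_of_real (\<alpha> * a$i)" using r by simp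
      then show ?thesis by (simp add: of_real_sum)
    qed
    then show ?thesis by (simp add: vec_eq_iff matrix_vector_mult_def Mc_def ac_def)
  qed
  obtain i0 where i0: "a $ i0 \<noteq> 0" using a_eig(1) by (auto simp: vec_eq_iff)
  have ac_ne: "ac \<noteq> 0" using i0 by (auto simp: ac_def vec_eq_iff)
  have ac_real: "vconj ac = ac" by (simp add: vconj_def ac_def vec_eq_iff)
  have Wk: "W \<subseteq> {v. killedp Mc v}" unfolding W_def
  proof (rule vec.span_minimal)
    show "\<Union>{gen_eigenspace Mc \<beta> | \<beta>. ceigenvalue Mc \<beta> \<and> Im \<beta> > 0} \<subseteq> {v. killedp Mc v}"
    proof
      fix x assume "x \<in> \<Union>{gen_eigenspace Mc \<beta> | \<beta>. ceigenvalue Mc \<beta> \<and> Im \<beta> > 0}"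
      then obtain \<beta> where "x \<in> gen_eigenspace Mc \<beta>" "Im \<beta> > 0" by blast
      then obtain k where "((\<lambda>x. Mc *v x - \<beta> *s x) ^^ k) x = 0" "Im \<beta> > 0"
        unfolding gen_eigenspace_def by blast
      then show "x \<in> {v. killedp Mc v}"
        unfolding killedp_def pm_funpow by (intro CollectI exI[of _ "replicate k \<beta>"]) auto
    qed
    show "vec.subspace {v. killedp Mc v}"
      unfolding vec.subspace_def by (simp add: killedp_zero killedp_add killedp_scale)
  qed
  have bk: "killedp Mc (b j)" for j
  proof -
    have "b j \<in> vec.span (range b)" by (rule vec.span_base) simp
    then show ?thesis using Wk b_basis(3) by auto
  qed
  have bind: "\<forall>j. \<gamma> j = 0" if g: "(\<Sum>j\<in>UNIV. \<gamma> j *s b j) = 0" for \<gamma>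
  proof (rule ccontr)
    assume "\<not> (\<forall>j. \<gamma> j = 0)"
    then obtain j0 where j0: "\<gamma> j0 \<noteq> 0" by blast
    define u where "u v = \<gamma> (inv b v)" for v
    have "(\<Sum>v\<in>range b. u v *s v) = (\<Sum>j\<in>UNIV. u (b j) *s b j)"
      using b_basis(1) by (simp add: sum.reindex)
    also have "\<dots> = 0" using g b_basis(1) by (simp add: u_def)
    finally have "vec.dependent (range b)"
      unfolding vec.dependent_finite[OF finite_imageI[OF finite_class.finite_UNIV]]
      using j0 b_basis(1) by (intro exI[of _ u]) (auto simp: u_def intro!: bexI[of _ "b j0"])
    then show False using b_basis(2) by simp
  qed
  interpret LA Mc \<alpha> ac b R
    by unfold_locales (use real ac_eig ac_ne ac_real bk bind R_def dim in auto)
  have detMc: "det Mc = 1" unfolding Mc_def det_of_int detM by simp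
  have "complex_of_real \<alpha> = det Bm * cnj (det Bm)" using det_relation detMc by simp
  then have cm: "(cmod (det Bm))^2 = \<alpha>"
    by (metis complex_norm_square of_real_eq_iff)
  have uu_eq: "uvec a b i = uu i" for i
    unfolding uvec_def uu_def by (simp add: vec_eq_iff ac_def split: option.splits)
  have span: "\<exists>s::'m\<Rightarrow>real. q = (\<Sum>i\<in>UNIV. complex_of_real (s i) *s uvec a b i)" if "Im (q $ None) = 0" for q
    using real_span[OF that] by (simp add: uu_eq)
  have ureal: "Im (uvec a b i $ None) = 0" for i by (simp add: uvec_def)
  have up0: "uvec a b i0 $ None = complex_of_real (a $ i0)" by (simp add: uvec_def)
  have g0G: "g0 \<alpha> R \<in> G" unfolding G_def by (rule g0_in_G)
  have tG: "(\<lambda>p. p + uvec a b i) \<in> G" for i unfolding G_def by (rule trans_in_G)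
  have g0D: "g0 \<alpha> R p \<in> upper_domain" if "p \<in> upper_domain" for p
    using that alpha_pos by (simp add: upper_domain_iff g0_def)
  have tD: "p + uvec a b i \<in> upper_domain" if "p \<in> upper_domain" for p i
    using that by (simp add: upper_domain_iff uvec_def)
  have iD: "emb \<i> \<in> upper_domain" by (simp add: upper_domain_iff)
  have part1: "\<forall>i. \<forall>p\<in>upper_domain. c i p = 0" if inv: "invariant_holo_1form G upper_domain c" for c
  proof -
    have hol: "\<And>k. holo (c k) upper_domain" using inv unfolding invariant_holo_1form_def by blast
    have finv: "form_at c (g p) (g' v) = form_at c p v"
      if "g \<in> G" "p \<in> upper_domain" "(g has_derivative g') (at p)" for g p g' v
      using inv that unfolding invariant_holo_1form_def by blast
    have per: "c k (p + uvec a b i) = c k p" if "p \<in> upper_domain" for k i p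
      using finv[of "\<lambda>p. p + uvec a b i" p id "axis k 1", OF tG that trans_deriv] by (simp add: form_at_axis)
    have relN: "c None p = complex_of_real \<alpha> * c None (g0 \<alpha> R p)" if "p \<in> upper_domain" for p
      using finv[of "g0 \<alpha> R" p "g0 \<alpha> R" "axis None 1", OF g0G that g0_deriv]
      unfolding g0_axis_None by (simp add: form_at_sum_option axis_def mult.commute)
    have relS: "c (Some j) p = (\<Sum>l\<in>UNIV. R $ j $ l * c (Some l) (g0 \<alpha> R p))" if "p \<in> upper_domain" for p j
      using finv[of "g0 \<alpha> R" p "g0 \<alpha> R" "axis (Some j) 1", OF g0G that g0_deriv]
      unfolding g0_axis_Some by (simp add: form_at_sum_option axis_def mult.commute)
    define Aop :: "('n option \<Rightarrow> complex) \<Rightarrow> ('n option \<Rightarrow> complex)" where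
      "Aop x = (\<lambda>k. case k of None \<Rightarrow> complex_of_real \<alpha> * x None | Some j \<Rightarrow> (\<Sum>l\<in>UNIV. R $ j $ l * x (Some l)))" for x
    have injA: "inj Aop"
    proof (rule injI)
      fix x y assume xy: "Aop x = Aop y"
      have "x None = y None" using fun_cong[OF xy, of None] alpha_pos by (simp add: Aop_def)
      moreover have "x (Some l) - y (Some l) = 0" for l
      proof (rule R_noeig[OF only_real, of 0])
        show "Im 0 = 0" by simp
        show "0 \<noteq> complex_of_real \<alpha>" using alpha_pos by simp
        show "(\<Sum>l\<in>UNIV. R $ j $ l * (x (Some l) - y (Some l))) = 0 * (x (Some j) - y (Some j))" for j
          using fun_cong[OF xy, of "Some j"] by (simp add: Aop_def algebra_simps sum_subtractf)
      qed
      ultimately show "x = y" by (metis (full_types) eq_iff_diff_eq_0 not_None_eq ext)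
    qed
    have rel: "(\<lambda>k. c k (emb w)) = Aop (\<lambda>k. c k (emb (complex_of_real \<alpha> * w)))" if "Im w > 0" for w
    proof
      fix k
      have ew: "emb w \<in> upper_domain" using that by (simp add: upper_domain_iff)
      show "c k (emb w) = Aop (\<lambda>k. c k (emb (complex_of_real \<alpha> * w))) k"
        using relN[OF ew] relS[OF ew] by (cases k) (simp_all add: Aop_def g0_emb)
    qed
    obtain C where C: "\<And>k p. p \<in> upper_domain \<Longrightarrow> c k p = C k"
      using const_family[OF hol ureal per span alpha_pos alpha_ne1 injA rel i0 up0] by blast
    have CN: "C None = 0"
    proof -
      have "C None = complex_of_real \<alpha> * C None" using relN[OF iD] C[OF iD, of None] C[OF g0D[OF iD], of None] by simp
      then show ?thesis using alpha_ne1 by (metis mult_cancel_right1 of_real_eq_1_iff)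
    qed
    have CS: "C (Some l) = 0" for l
    proof (rule R_noeig[OF only_real, of 1])
      show "Im 1 = 0" by simp
      show "1 \<noteq> complex_of_real \<alpha>" using alpha_ne1 by (metis of_real_eq_1_iff)
      show "(\<Sum>l\<in>UNIV. R $ j $ l * C (Some l)) = 1 * C (Some j)" for j
        using relS[OF iD, of j] C[OF iD] C[OF g0D[OF iD]] by simp
    qed
    show ?thesis
    proof (intro allI ballI)
      fix i and p :: "complex^('n option)" assume p: "p \<in> upper_domain"
      show "c i p = 0" using C[OF p, of i] CN CS by (cases i) auto
    qed
  qed
  have part2: "\<forall>p\<in>upper_domain. h p = 0" if k: "k > 0" and inv: "invariant_pluricanonical G upper_domain k h" for k h
  proof -
    have hol: "holo h upper_domain" using inv unfolding invariant_pluricanonical_def by blast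
    have hinv: "h (g p) * (cjac g') ^ k = h p"
      if "g \<in> G" "p \<in> upper_domain" "(g has_derivative g') (at p)" for g p g'
      using inv that unfolding invariant_pluricanonical_def by blast
    have per: "h (p + uvec a b i) = h p" if "p \<in> upper_domain" for i p
      using hinv[OF tG that trans_deriv] by (simp add: cjac_id)
    define lam where "lam = det Bm"
    have relg: "h (g0 \<alpha> R p) * lam ^ k = h p" if "p \<in> upper_domain" for p
      using hinv[OF g0G that g0_deriv] by (simp add: cjac_g0 lam_def)
    have lnz: "lam \<noteq> 0" using cm alpha_pos by (auto simp: lam_def)
    define Aop :: "(unit \<Rightarrow> complex) \<Rightarrow> (unit \<Rightarrow> complex)" where "Aop x = (\<lambda>u. lam ^ k * x u)" for x
    have injA: "inj Aop"
    proof (rule injI)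
      fix x y assume "Aop x = Aop y"
      then show "x = y" using lnz by (auto simp: Aop_def fun_eq_iff)
    qed
    have rel: "(\<lambda>u::unit. h (emb w)) = Aop (\<lambda>u. h (emb (complex_of_real \<alpha> * w)))" if "Im w > 0" for w
    proof -
      have ew: "emb w \<in> upper_domain" using that by (simp add: upper_domain_iff)
      show ?thesis using relg[OF ew] by (auto simp: Aop_def g0_emb fun_eq_iff mult.commute)
    qed
    obtain C where C: "\<And>u p. p \<in> upper_domain \<Longrightarrow> (\<lambda>u::unit. h) u p = C u"
      using const_family[of "\<lambda>u::unit. h", OF hol ureal per span alpha_pos alpha_ne1 injA rel i0 up0] by blast
    have hC: "h p = C ()" if "p \<in> upper_domain" for p using C[OF that] by simp
    have "C () * lam ^ k = C ()" using relg[OF iD] hC[OF iD] hC[OF g0D[OF iD]] by simp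
    moreover have "lam ^ k \<noteq> 1"
    proof
      assume "lam ^ k = 1"
      then have "cmod lam ^ k = 1" by (metis norm_one norm_power)
      then have "cmod lam = 1" using k power_eq_iff_eq_base[of k "cmod lam" 1] by simp
      then have "\<alpha> = 1" using cm by (simp add: lam_def)
      then show False using alpha_ne1 by simp
    qed
    ultimately have "C () = 0" by (metis mult_cancel_left1 mult.commute)
    then show ?thesis using hC by simp
  qed
  show ?thesis using part1 part2 by blast
qed

end
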